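(* Let $Z=\{z_n\}_{n\in\mathbb{N}}$, $W=\{w_m\}_{m\in\mathbb{N}}$ be almost periodic divisors in a strip $S$. Then for any $\varepsilon>0$ and any substrip $S^0\subset S$ with $\operatorname{dist}(S^0,\partial S)>\varepsilon$, there is a relatively dense set $E\subset\mathbb{R}$ such that for every $\tau\in E$ there are bijections $\sigma_Z,\sigma_W:\mathbb{N}\to\mathbb{N}$ such that for all $z_j\in|Z|\cap S^0$ and all $w_r\in|W|\cap S^0$: $$|z_j+i\tau-z_{\sigma_Z(j)}|<\varepsilon,\quad |w_r+i\tau-w_{\sigma_W(r)}|<\varepsilon,$$ $$|z_j-i\tau-z_{\sigma_Z^{-1}(j)}|<\varepsilon,\quad |w_r-i\tau-w_{\sigma_W^{-1}(r)}|<\varepsilon.$$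
   Context: A (vertical) strip is a set $\{z\in\mathbb{C}: a<\operatorname{Re} z<b\}$ with $-\infty\le a<b\le\infty$; a substrip of $S$ is a strip of this form contained in $S$. A divisor in $S$ is a sequence $\{z_j\}\subset S$ without limit points in $S$ (points may repeat finitely often, encoding multiplicity); $|Z|$ denotes its set of points. A set $E\subset\mathbb{R}$ is relatively dense if there is $L<\infty$ with $E\cap[\alpha,\alpha+L]\ne\emptyset$ for every $\alpha\in\mathbb{R}$. A divisor $Z=\{z_j\}$ in $S$ is almost periodic if for every $\varepsilon>0$ and every substrip $S^0$ with $\overline{S^0}\subset S$, the set of all $\tau\in\mathbb{R}$ for which there exists a bijection $\sigma:\mathbb{N}\to\mathbb{N}$ such that for every $j$, ($z_j\in S^0$ or $z_{\sigma(j)}\in S^0$) implies $|z_j+i\tau-z_{\sigma(j)}|<\varepsilon$, is relatively dense. *)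

theory Defs
  imports "HOL-Analysis.Analysis" "HOL-Library.Extended_Real"
begin

definition strip :: "ereal \<Rightarrow> ereal \<Rightarrow> complex set" where
  "strip a b = {z. a < ereal (Re z) \<and> ereal (Re z) < b}"

text \<open>A divisor in S: a sequence of points of S without limit points in S
  (each point of S has a neighbourhood containing only finitely many terms,
  so points repeat only finitely often).\<close>
definition divisor_in :: "(nat \<Rightarrow> complex) \<Rightarrow> complex set \<Rightarrow> bool" where
  "divisor_in z S \<longleftrightarrow> (\<forall>j. z j \<in> S) \<and>
     (\<forall>w\<in>S. \<exists>r>0. finite {j. z j \<in> ball w r})"

definition rel_dense :: "real set \<Rightarrow> bool" where
  "rel_dense E \<longleftrightarrow> (\<exists>L. \<forall>\<alpha>. E \<inter> {\<alpha>..\<alpha>+L} \<noteq> {})"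

definition almost_periodic_divisor :: "(nat \<Rightarrow> complex) \<Rightarrow> ereal \<Rightarrow> ereal \<Rightarrow> bool" where
  "almost_periodic_divisor z a b \<longleftrightarrow> divisor_in z (strip a b) \<and>
     (\<forall>\<epsilon>>0. \<forall>a0 b0. a0 < b0 \<and> strip a0 b0 \<subseteq> strip a b \<and>
        closure (strip a0 b0) \<subseteq> strip a b \<longrightarrow>
        rel_dense {\<tau>. \<exists>\<sigma>. bij \<sigma> \<and>
          (\<forall>j. (z j \<in> strip a0 b0 \<or> z (\<sigma> j) \<in> strip a0 b0) \<longrightarrow>
               cmod (z j + \<i> * complex_of_real \<tau> - z (\<sigma> j)) < \<epsilon>)})"

end

theory Submission
  imports Defs
begin

definition QP :: "(nat \<Rightarrow> complex) \<Rightarrow> complex set \<Rightarrow> real \<Rightarrow> real \<Rightarrow> bool" where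
  "QP z A e \<tau> \<longleftrightarrow> (\<exists>\<sigma>. bij \<sigma> \<and> (\<forall>j. (z j \<in> A \<or> z (\<sigma> j) \<in> A) \<longrightarrow>
      cmod (z j + \<i> * complex_of_real \<tau> - z (\<sigma> j)) < e))"

lemma re_close: "cmod (x + \<i> * complex_of_real t - y) < e \<Longrightarrow> \<bar>Re y - Re x\<bar> < e"
proof -
  assume h: "cmod (x + \<i> * complex_of_real t - y) < e"
  have "\<bar>Re (x + \<i> * complex_of_real t - y)\<bar> \<le> cmod (x + \<i> * complex_of_real t - y)"
    by (rule abs_Re_le_cmod)
  then show ?thesis using h by simp
qed

lemma QP_comp:
  assumes q1: "QP z A e1 t1" and q2: "QP z A e2 t2" and e: "e1 > 0" "e2 > 0"
    and h1: "\<And>x y. x \<in> B \<Longrightarrow> \<bar>Re y - Re x\<bar> < e1 \<Longrightarrow> y \<in> A"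
    and h2: "\<And>x y. x \<in> B \<Longrightarrow> \<bar>Re y - Re x\<bar> < e2 \<Longrightarrow> y \<in> A"
  shows "QP z B (e1 + e2) (t1 + t2)"
proof -
  obtain s1 where s1: "bij s1" "\<And>j. (z j \<in> A \<or> z (s1 j) \<in> A) \<Longrightarrow>
      cmod (z j + \<i> * complex_of_real t1 - z (s1 j)) < e1" using q1 unfolding QP_def by blast
  obtain s2 where s2: "bij s2" "\<And>j. (z j \<in> A \<or> z (s2 j) \<in> A) \<Longrightarrow>
      cmod (z j + \<i> * complex_of_real t2 - z (s2 j)) < e2" using q2 unfolding QP_def by blast
  have "bij (s2 \<circ> s1)" using s1(1) s2(1) by (rule bij_comp)
  moreover have "cmod (z j + \<i> * complex_of_real (t1 + t2) - z ((s2 \<circ> s1) j)) < e1 + e2"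
    if "z j \<in> B \<or> z ((s2 \<circ> s1) j) \<in> B" for j
  proof -
    have A1: "cmod (z j + \<i> * complex_of_real t1 - z (s1 j)) < e1 \<and>
              cmod (z (s1 j) + \<i> * complex_of_real t2 - z (s2 (s1 j))) < e2"
    proof (cases "z j \<in> B")
      case True
      have jA: "z j \<in> A" using h1[OF True, of "z j"] e by simp
      have c1: "cmod (z j + \<i> * complex_of_real t1 - z (s1 j)) < e1"
        using s1(2) jA by blast
      have "z (s1 j) \<in> A" using h1[OF True] re_close[OF c1] by blast
      then show ?thesis using c1 s2(2) by blast
    next
      case False
      then have B: "z (s2 (s1 j)) \<in> B" using that by simp
      have jA: "z (s2 (s1 j)) \<in> A" using h2[OF B, of "z (s2 (s1 j))"] e by simp
      have c2: "cmod (z (s1 j) + \<i> * complex_of_real t2 - z (s2 (s1 j))) < e2"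
        using s2(2) jA by blast
      have "\<bar>Re (z (s1 j)) - Re (z (s2 (s1 j)))\<bar> < e2" using re_close[OF c2] by linarith
      then have "z (s1 j) \<in> A" using h2[OF B] by blast
      then show ?thesis using c2 s1(2) by blast
    qed
    have eq: "z j + \<i> * complex_of_real (t1 + t2) - z ((s2 \<circ> s1) j) =
       (z j + \<i> * complex_of_real t1 - z (s1 j)) + (z (s1 j) + \<i> * complex_of_real t2 - z (s2 (s1 j)))"
      by (simp add: algebra_simps)
    show ?thesis unfolding eq using A1 norm_triangle_lt[of _ _ "e1+e2"]
      by (smt (verit, best) norm_triangle_ineq)
  qed
  ultimately show ?thesis unfolding QP_def by blast
qed

lemma QP_neg: assumes "QP z A e t" shows "QP z A e (-t)"
proof -
  obtain s where s: "bij s" "\<And>j. (z j \<in> A \<or> z (s j) \<in> A) \<Longrightarrow>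
      cmod (z j + \<i> * complex_of_real t - z (s j)) < e" using assms unfolding QP_def by blast
  have "bij (inv s)" using s(1) by (rule bij_imp_bij_inv)
  moreover have "cmod (z j + \<i> * complex_of_real (-t) - z (inv s j)) < e"
    if "z j \<in> A \<or> z (inv s j) \<in> A" for j
  proof -
    have sj: "s (inv s j) = j" using s(1) by (simp add: bij_is_surj surj_f_inv_f)
    have "cmod (z (inv s j) + \<i> * complex_of_real t - z j) < e" using s(2)[of "inv s j"] sj that by auto
    moreover have "z j + \<i> * complex_of_real (-t) - z (inv s j) = - (z (inv s j) + \<i> * complex_of_real t - z j)"
      by (simp add: algebra_simps)
    ultimately show ?thesis by (metis norm_minus_cancel)
  qed
  ultimately show ?thesis unfolding QP_def by blast
qed

lemma QP_small: "\<bar>d\<bar> < e \<Longrightarrow> QP z A e d"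
  unfolding QP_def by (rule exI[of _ id]) (simp add: norm_mult)

lemma QP_mono: "QP z A e t \<Longrightarrow> B \<subseteq> A \<Longrightarrow> e \<le> e' \<Longrightarrow> QP z B e' t"
  unfolding QP_def by (meson less_le_trans subsetD)

lemma QP_final:
  assumes "QP z A e t" shows "\<exists>\<sigma>. bij \<sigma> \<and> (\<forall>j. z j \<in> A \<longrightarrow>
           cmod (z j + \<i> * complex_of_real t - z (\<sigma> j)) < e \<and>
           cmod (z j - \<i> * complex_of_real t - z (inv \<sigma> j)) < e)"
proof -
  obtain s where s: "bij s" "\<And>j. (z j \<in> A \<or> z (s j) \<in> A) \<Longrightarrow>
      cmod (z j + \<i> * complex_of_real t - z (s j)) < e" using assms unfolding QP_def by blast
  have "cmod (z j - \<i> * complex_of_real t - z (inv s j)) < e" if "z j \<in> A" for j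
  proof -
    have sj: "s (inv s j) = j" using s(1) by (simp add: bij_is_surj surj_f_inv_f)
    have "cmod (z (inv s j) + \<i> * complex_of_real t - z j) < e" using s(2)[of "inv s j"] sj that by auto
    moreover have "z j - \<i> * complex_of_real t - z (inv s j) = - (z (inv s j) + \<i> * complex_of_real t - z j)"
      by (simp add: algebra_simps)
    ultimately show ?thesis by (metis norm_minus_cancel)
  qed
  then show ?thesis using s by blast
qed


lemma strip_shift:
  assumes "x \<in> strip (c - ereal t) (d + ereal t)" "\<bar>Re y - Re x\<bar> < s"
  shows "y \<in> strip (c - ereal (t+s)) (d + ereal (t+s))"
  using assms unfolding strip_def by (cases c; cases d) auto

lemma strip_mono_t:
  assumes "x \<in> strip (c - ereal t) (d + ereal t)" "t \<le> s"
  shows "x \<in> strip (c - ereal s) (d + ereal s)"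
  using assms unfolding strip_def by (cases c; cases d) auto

lemma frontier_pt_a:
  assumes "a < b" "a = ereal ra"
  shows "complex_of_real ra \<in> frontier (strip a b)"
proof -
  have "complex_of_real ra \<in> closure (strip a b)"
    unfolding closure_approachable
  proof (intro allI impI)
    fix e :: real assume e: "e > 0"
    have "a < min b (ereal (ra + e))" using assms e by auto
    then obtain y where y: "a < ereal y" "ereal y < min b (ereal (ra + e))"
      using ereal_dense2 by blast
    have "complex_of_real y \<in> strip a b" using y unfolding strip_def by auto
    moreover have "dist (complex_of_real y) (complex_of_real ra) < e"
      using y assms by (simp add: dist_complex_def flip: of_real_diff)
    ultimately show "\<exists>y\<in>strip a b. dist y (complex_of_real ra) < e" by blast
  qed
  moreover have "complex_of_real ra \<notin> interior (strip a b)"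
    using interior_subset[of "strip a b"] assms unfolding strip_def by auto
  ultimately show ?thesis unfolding frontier_def by blast
qed

lemma frontier_pt_b:
  assumes "a < b" "b = ereal rb"
  shows "complex_of_real rb \<in> frontier (strip a b)"
proof -
  have "complex_of_real rb \<in> closure (strip a b)"
    unfolding closure_approachable
  proof (intro allI impI)
    fix e :: real assume e: "e > 0"
    have "max a (ereal (rb - e)) < b" using assms e by auto
    then obtain y where y: "max a (ereal (rb - e)) < ereal y" "ereal y < b"
      using ereal_dense2 by blast
    have "complex_of_real y \<in> strip a b" using y unfolding strip_def by auto
    moreover have "dist (complex_of_real y) (complex_of_real rb) < e"
      using y assms by (simp add: dist_complex_def flip: of_real_diff)
    ultimately show "\<exists>y\<in>strip a b. dist y (complex_of_real rb) < e" by blast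
  qed
  moreover have "complex_of_real rb \<notin> interior (strip a b)"
    using interior_subset[of "strip a b"] assms unfolding strip_def by auto
  ultimately show ?thesis unfolding frontier_def by blast
qed

lemma margin_a:
  assumes ab: "a < b" and a0b0: "a0 < b0" and sub: "strip a0 b0 \<subseteq> strip a b"
    and sd: "setdist (strip a0 b0) (frontier (strip a b)) > \<epsilon>" and ra: "a = ereal ra"
  shows "\<exists>ra0. a0 = ereal ra0 \<and> ra + \<epsilon> < ra0"
proof -
  have "a \<le> a0"
  proof (rule ccontr)
    assume "\<not> a \<le> a0"
    then have "a0 < min a b0" using a0b0 by auto
    then obtain y where y: "a0 < ereal y" "ereal y < min a b0" using ereal_dense2 by blast
    then have "complex_of_real y \<in> strip a0 b0" unfolding strip_def by auto
    moreover have "complex_of_real y \<notin> strip a b" using y unfolding strip_def by auto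
    ultimately show False using sub by blast
  qed
  then obtain ra0 where ra0: "a0 = ereal ra0" using ra a0b0 by (cases a0) auto
  have "ra \<le> ra0" using \<open>a \<le> a0\<close> ra ra0 by simp
  show ?thesis
  proof (rule ccontr)
    assume "\<not> ?thesis"
    then have le: "ra0 \<le> ra + \<epsilon>" using ra0 by auto
    define S where "S = setdist (strip a0 b0) (frontier (strip a b))"
    have "a0 < min b0 (ereal (ra0 + (S - \<epsilon>)/2))" using a0b0 ra0 sd S_def by auto
    then obtain y where y: "a0 < ereal y" "ereal y < min b0 (ereal (ra0 + (S - \<epsilon>)/2))"
      using ereal_dense2 by blast
    have p: "complex_of_real y \<in> strip a0 b0" using y unfolding strip_def by auto
    have "S \<le> dist (complex_of_real y) (complex_of_real ra)"
      unfolding S_def by (rule setdist_le_dist[OF p frontier_pt_a[OF ab ra]])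
    also have "\<dots> = \<bar>y - ra\<bar>" by (simp add: dist_complex_def flip: of_real_diff)
    also have "\<dots> < S"
    proof -
      have "\<epsilon> < S" using sd S_def by simp
      moreover have "ra0 < y" "y < ra0 + (S - \<epsilon>)/2" using y ra0 by auto
      ultimately have "y - ra < S" using le by (simp add: field_simps)
      then show ?thesis using \<open>ra \<le> ra0\<close> \<open>ra0 < y\<close> by simp
    qed
    finally show False by simp
  qed
qed

lemma margin_b:
  assumes ab: "a < b" and a0b0: "a0 < b0" and sub: "strip a0 b0 \<subseteq> strip a b"
    and sd: "setdist (strip a0 b0) (frontier (strip a b)) > \<epsilon>" and rb: "b = ereal rb"
  shows "\<exists>rb0. b0 = ereal rb0 \<and> rb0 + \<epsilon> < rb"
proof -
  have "b0 \<le> b"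
  proof (rule ccontr)
    assume "\<not> b0 \<le> b"
    then have "max a0 b < b0" using a0b0 by auto
    then obtain y where y: "max a0 b < ereal y" "ereal y < b0" using ereal_dense2 by blast
    then have "complex_of_real y \<in> strip a0 b0" unfolding strip_def by auto
    moreover have "complex_of_real y \<notin> strip a b" using y unfolding strip_def by auto
    ultimately show False using sub by blast
  qed
  then obtain rb0 where rb0: "b0 = ereal rb0" using rb a0b0 by (cases b0) auto
  have "rb0 \<le> rb" using \<open>b0 \<le> b\<close> rb rb0 by simp
  show ?thesis
  proof (rule ccontr)
    assume "\<not> ?thesis"
    then have le: "rb - \<epsilon> \<le> rb0" using rb0 by auto
    define S where "S = setdist (strip a0 b0) (frontier (strip a b))"
    have "max a0 (ereal (rb0 - (S - \<epsilon>)/2)) < b0" using a0b0 rb0 sd S_def by auto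
    then obtain y where y: "max a0 (ereal (rb0 - (S - \<epsilon>)/2)) < ereal y" "ereal y < b0"
      using ereal_dense2 by blast
    have p: "complex_of_real y \<in> strip a0 b0" using y unfolding strip_def by auto
    have "S \<le> dist (complex_of_real y) (complex_of_real rb)"
      unfolding S_def by (rule setdist_le_dist[OF p frontier_pt_b[OF ab rb]])
    also have "\<dots> = \<bar>y - rb\<bar>" by (simp add: dist_complex_def flip: of_real_diff)
    also have "\<dots> < S"
    proof -
      have "\<epsilon> < S" using sd S_def by simp
      moreover have "y < rb0" "rb0 - (S - \<epsilon>)/2 < y" using y rb0 by auto
      ultimately have "rb - y < S" using le by (simp add: field_simps)
      then show ?thesis using \<open>rb0 \<le> rb\<close> \<open>y < rb0\<close> by simp
    qed
    finally show False by simp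
  qed
qed

lemma closure_in:
  assumes ab: "a < b" and a0b0: "a0 < b0" and sub: "strip a0 b0 \<subseteq> strip a b"
    and h: "frontier (strip a b) = {} \<or> setdist (strip a0 b0) (frontier (strip a b)) > \<epsilon>"
    and t: "0 \<le> t" "t < \<epsilon>"
  shows "closure (strip (a0 - ereal t) (b0 + ereal t)) \<subseteq> strip a b"
proof -
  define C where "C = {x. a0 - ereal t \<le> ereal (Re x) \<and> ereal (Re x) \<le> b0 + ereal t}"
  have "closed C" unfolding C_def
    by (intro closed_Collect_conj closed_Collect_le continuous_intros)
  moreover have "strip (a0 - ereal t) (b0 + ereal t) \<subseteq> C"
    unfolding C_def strip_def by auto
  ultimately have "closure (strip (a0 - ereal t) (b0 + ereal t)) \<subseteq> C"
    by (rule closure_minimal[rotated])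
  moreover have "C \<subseteq> strip a b"
  proof
    fix x assume x: "x \<in> C"
    have "a < ereal (Re x)"
    proof (cases a)
      case (real ra)
      then have "setdist (strip a0 b0) (frontier (strip a b)) > \<epsilon>"
        using h frontier_pt_a[OF ab real] by auto
      then obtain ra0 where "a0 = ereal ra0" "ra + \<epsilon> < ra0"
        using margin_a[OF ab a0b0 sub _ real] by blast
      then show ?thesis using x t real unfolding C_def by auto
    next
      case PInf then show ?thesis using ab by simp
    next
      case MInf then show ?thesis by simp
    qed
    moreover have "ereal (Re x) < b"
    proof (cases b)
      case (real rb)
      then have "setdist (strip a0 b0) (frontier (strip a b)) > \<epsilon>"
        using h frontier_pt_b[OF ab real] by auto
      then obtain rb0 where "b0 = ereal rb0" "rb0 + \<epsilon> < rb"
        using margin_b[OF ab a0b0 sub _ real] by blast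
      then show ?thesis using x t real unfolding C_def by auto
    next
      case MInf then show ?thesis using ab by simp
    next
      case PInf then show ?thesis by simp
    qed
    ultimately show "x \<in> strip a b" unfolding strip_def by auto
  qed
  ultimately show ?thesis by blast
qed


lemma floor_close0:
  assumes "\<lfloor>p\<rfloor> = \<lfloor>q\<rfloor>" shows "\<bar>p - q\<bar> < (1::real)"
proof -
  have a: "real_of_int \<lfloor>p\<rfloor> \<le> p" "p < real_of_int \<lfloor>p\<rfloor> + 1"
    using floor_correct[of p] by auto
  have b: "real_of_int \<lfloor>q\<rfloor> \<le> q" "q < real_of_int \<lfloor>q\<rfloor> + 1" 
    using floor_correct[of q] by auto
  define k where "k = real_of_int \<lfloor>p\<rfloor>"
  have "k \<le> p" "p < k + 1" "k \<le> q" "q < k + 1" using a b assms unfolding k_def by simp_all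
  then show ?thesis unfolding abs_less_iff by linarith
qed

lemma floor_close:
  assumes "e > 0" "\<lfloor>x / e\<rfloor> = \<lfloor>y / e\<rfloor>" shows "\<bar>x - y\<bar> < (e::real)"
proof -
  have "\<bar>x / e - y / e\<bar> < 1" using floor_close0[OF assms(2)] .
  moreover have "x / e - y / e = (x - y) / e" by (rule diff_divide_distrib[symmetric])
  moreover have "\<bar>(x - y) / e\<bar> = \<bar>x - y\<bar> / e" using assms(1) by (simp add: abs_divide)
  ultimately have "\<bar>x - y\<bar> / e < 1" by metis
  then show ?thesis using assms(1) by (simp add: pos_divide_less_eq)
qed

lemma reldense_bound:
  fixes L :: real and M n m :: int and \<alpha> x y :: real
  assumes L: "L > 0" and n: "n = M + 1 + \<lceil>\<alpha>/L\<rceil>" and m: "\<bar>m\<bar> \<le> M"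
    and x: "of_int n * L \<le> x" "x \<le> of_int n * L + L"
    and y: "of_int m * L \<le> y" "y \<le> of_int m * L + L"
  shows "\<alpha> \<le> x - y \<and> x - y \<le> \<alpha> + (2 * of_int M + 3) * L"
proof -
  define k where "k = real_of_int \<lceil>\<alpha>/L\<rceil>"
  have "\<alpha> / L \<le> k" "k < \<alpha> / L + 1" unfolding k_def using ceiling_correct[of "\<alpha>/L"] by auto
  then have k1: "\<alpha> \<le> k * L" and k2: "k * L < \<alpha> + L" using L by (auto simp: field_simps)
  have nr: "real_of_int n = real_of_int M + 1 + k" using n k_def by simp
  have mr: "- real_of_int M \<le> real_of_int m" "real_of_int m \<le> real_of_int M" using m by linarith+
  have "k * L \<le> (real_of_int n - real_of_int m - 1) * L"
    by (rule mult_right_mono) (use nr mr L in auto)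
  moreover have "(real_of_int n - real_of_int m + 1) * L \<le> (2 * real_of_int M + 2 + k) * L"
    by (rule mult_right_mono) (use nr mr L in auto)
  ultimately show ?thesis using x y k1 k2 by (auto simp: algebra_simps)
qed

lemma rel_dense_obtain:
  assumes "rel_dense E" obtains L where "L > 0" "\<And>\<alpha>. \<exists>x\<in>E. \<alpha> \<le> x \<and> x \<le> \<alpha> + L"
proof -
  obtain L0 where L0: "\<And>\<alpha>. E \<inter> {\<alpha>..\<alpha>+L0} \<noteq> {}" using assms unfolding rel_dense_def by blast
  have "\<exists>x\<in>E. \<alpha> \<le> x \<and> x \<le> \<alpha> + max L0 1" for \<alpha>
  proof -
    obtain x where "x \<in> E" "\<alpha> \<le> x" "x \<le> \<alpha> + L0" using L0[of \<alpha>] by auto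
    then show ?thesis by (intro bexI[of _ x]) auto
  qed
  then show ?thesis using that[of "max L0 1"] by auto
qed

lemma rel_dense_mono:
  assumes "rel_dense A" "\<And>\<alpha>. \<exists>x\<in>A. \<alpha> \<le> x \<and> x \<le> \<alpha> + L" shows "rel_dense A"
  using assms by simp

lemma ap_use:
  assumes ap: "almost_periodic_divisor z a b" and e: "e > 0"
    and ab: "a < b" and a0b0: "a0 < b0" and sub: "strip a0 b0 \<subseteq> strip a b"
    and h: "frontier (strip a b) = {} \<or> setdist (strip a0 b0) (frontier (strip a b)) > \<epsilon>"
    and t: "0 \<le> t" "t < \<epsilon>"
  shows "rel_dense {\<tau>. QP z (strip (a0 - ereal t) (b0 + ereal t)) e \<tau>}"
proof -
  have cl: "closure (strip (a0 - ereal t) (b0 + ereal t)) \<subseteq> strip a b"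
    by (rule closure_in[OF ab a0b0 sub h t])
  have lt: "a0 - ereal t < b0 + ereal t" using a0b0 t by (cases a0; cases b0) auto
  have H: "\<forall>\<epsilon>>0. \<forall>a0 b0. a0 < b0 \<and> strip a0 b0 \<subseteq> strip a b \<and>
        closure (strip a0 b0) \<subseteq> strip a b \<longrightarrow>
        rel_dense {\<tau>. \<exists>\<sigma>. bij \<sigma> \<and>
          (\<forall>j. (z j \<in> strip a0 b0 \<or> z (\<sigma> j) \<in> strip a0 b0) \<longrightarrow>
               cmod (z j + \<i> * complex_of_real \<tau> - z (\<sigma> j)) < \<epsilon>)}"
    using ap unfolding almost_periodic_divisor_def by (rule conjunct2)
  have "strip (a0 - ereal t) (b0 + ereal t) \<subseteq> strip a b"
    using cl closure_subset by blast
  then show ?thesis unfolding QP_def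
    using H[rule_format, OF e, of "a0 - ereal t" "b0 + ereal t"] lt cl by simp
qed

theorem lemma2:
  fixes z w :: "nat \<Rightarrow> complex" and a b a0 b0 :: ereal and \<epsilon> :: real
  assumes "a < b"
    and "almost_periodic_divisor z a b"
    and "almost_periodic_divisor w a b"
    and "\<epsilon> > 0"
    and "a0 < b0"
    and "strip a0 b0 \<subseteq> strip a b"
    and "frontier (strip a b) = {} \<or> setdist (strip a0 b0) (frontier (strip a b)) > \<epsilon>"
  shows "\<exists>E. rel_dense E \<and>
    (\<forall>\<tau>\<in>E. \<exists>\<sigma>Z \<sigma>W. bij \<sigma>Z \<and> bij \<sigma>W \<and>
       (\<forall>j. z j \<in> strip a0 b0 \<longrightarrow>
           cmod (z j + \<i> * complex_of_real \<tau> - z (\<sigma>Z j)) < \<epsilon> \<and>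
           cmod (z j - \<i> * complex_of_real \<tau> - z (inv \<sigma>Z j)) < \<epsilon>) \<and>
       (\<forall>r. w r \<in> strip a0 b0 \<longrightarrow>
           cmod (w r + \<i> * complex_of_real \<tau> - w (\<sigma>W r)) < \<epsilon> \<and>
           cmod (w r - \<i> * complex_of_real \<tau> - w (inv \<sigma>W r)) < \<epsilon>))"
proof -
  define e where "e = \<epsilon> / 4"
  have e0: "e > 0" using assms(4) e_def by simp
  define T where "T t = strip (a0 - ereal t) (b0 + ereal t)" for t
  have T0: "T 0 = strip a0 b0" unfolding T_def by (simp add: zero_ereal_def[symmetric])
  have Tsh: "x \<in> T t \<Longrightarrow> \<bar>Re y - Re x\<bar> < s \<Longrightarrow> t + s \<le> t' \<Longrightarrow> y \<in> T t'" for x y t s t'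
    unfolding T_def by (meson strip_shift strip_mono_t)
  have RA: "rel_dense {\<tau>. QP z (T (3*e)) e \<tau>}" unfolding T_def
    by (rule ap_use[OF assms(2) e0 assms(1,5,6,7)]) (use e0 e_def in auto)
  have RB: "rel_dense {\<tau>. QP w (T (3*e)) e \<tau>}" unfolding T_def
    by (rule ap_use[OF assms(3) e0 assms(1,5,6,7)]) (use e0 e_def in auto)
  obtain LA where LA: "LA > 0" "\<And>\<alpha>. \<exists>x\<in>{\<tau>. QP z (T (3*e)) e \<tau>}. \<alpha> \<le> x \<and> x \<le> \<alpha> + LA"
    using rel_dense_obtain[OF RA] by blast
  obtain LB where LB: "LB > 0" "\<And>\<alpha>. \<exists>x\<in>{\<tau>. QP w (T (3*e)) e \<tau>}. \<alpha> \<le> x \<and> x \<le> \<alpha> + LB"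
    using rel_dense_obtain[OF RB] by blast
  define L where "L = max LA LB"
  have L0: "L > 0" using LA(1) L_def by auto
  have exA: "\<exists>x. QP z (T (3*e)) e x \<and> \<alpha> \<le> x \<and> x \<le> \<alpha> + L" for \<alpha>
  proof -
    obtain x where "x \<in> {\<tau>. QP z (T (3*e)) e \<tau>}" "\<alpha> \<le> x" "x \<le> \<alpha> + LA"
      using LA(2)[of \<alpha>] by blast
    then show ?thesis using L_def by (intro exI[of _ x]) auto
  qed
  have exB: "\<exists>x. QP w (T (3*e)) e x \<and> \<alpha> \<le> x \<and> x \<le> \<alpha> + L" for \<alpha>
  proof -
    obtain x where "x \<in> {\<tau>. QP w (T (3*e)) e \<tau>}" "\<alpha> \<le> x" "x \<le> \<alpha> + LB"
      using LB(2)[of \<alpha>] by blast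
    then show ?thesis using L_def by (intro exI[of _ x]) auto
  qed
  define t1 where "t1 n = (SOME x. QP z (T (3*e)) e x \<and> of_int n * L \<le> x \<and> x \<le> of_int n * L + L)" for n :: int
  define t2 where "t2 n = (SOME x. QP w (T (3*e)) e x \<and> of_int n * L \<le> x \<and> x \<le> of_int n * L + L)" for n :: int
  have t1: "QP z (T (3*e)) e (t1 n) \<and> of_int n * L \<le> t1 n \<and> t1 n \<le> of_int n * L + L" for n
    unfolding t1_def by (rule someI_ex[OF exA])
  have t2: "QP w (T (3*e)) e (t2 n) \<and> of_int n * L \<le> t2 n \<and> t2 n \<le> of_int n * L + L" for n
    unfolding t2_def by (rule someI_ex[OF exB])
  define c where "c n = \<lfloor>(t1 n - t2 n) / e\<rfloor>" for n
  have "range c \<subseteq> {\<lfloor>-L/e\<rfloor> .. \<lfloor>L/e\<rfloor>}"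
  proof
    fix v assume "v \<in> range c"
    then obtain n where n: "v = c n" by blast
    have "-L \<le> t1 n - t2 n" "t1 n - t2 n \<le> L" using t1[of n] t2[of n] by auto
    then have "-L/e \<le> (t1 n - t2 n)/e" "(t1 n - t2 n)/e \<le> L/e" using e0
      using divide_right_mono[of "-L" "t1 n - t2 n" e] divide_right_mono[of "t1 n - t2 n" L e] by auto
    then show "v \<in> {\<lfloor>-L/e\<rfloor> .. \<lfloor>L/e\<rfloor>}" unfolding n c_def by (auto intro: floor_mono)
  qed
  then have fin: "finite (range c)" by (rule finite_subset) simp
  define rep where "rep v = (SOME n. c n = v)" for v
  have rep: "c (rep (c n)) = c n" for n unfolding rep_def by (rule someI_ex) blast
  define M where "M = Max ((\<lambda>v. \<bar>rep v\<bar>) ` range c)"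
  have Mb: "\<bar>rep (c n)\<bar> \<le> M" for n unfolding M_def by (rule Max_ge) (use fin in auto)
  define E where "E = range (\<lambda>n. t1 n - t1 (rep (c n)))"
  have "rel_dense E" unfolding rel_dense_def
  proof (intro exI allI)
    fix \<alpha>
    define n where "n = M + 1 + \<lceil>\<alpha>/L\<rceil>"
    have "\<alpha> \<le> t1 n - t1 (rep (c n)) \<and> t1 n - t1 (rep (c n)) \<le> \<alpha> + (2 * of_int M + 3) * L"
      by (rule reldense_bound[OF L0 n_def Mb]) (use t1[of n] t1[of "rep (c n)"] in auto)
    moreover have "t1 n - t1 (rep (c n)) \<in> E" unfolding E_def by (rule rangeI)
    ultimately show "E \<inter> {\<alpha>..\<alpha> + (2 * of_int M + 3) * L} \<noteq> {}" by auto
  qed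
  moreover have "\<exists>\<sigma>Z \<sigma>W. bij \<sigma>Z \<and> bij \<sigma>W \<and>
       (\<forall>j. z j \<in> strip a0 b0 \<longrightarrow>
           cmod (z j + \<i> * complex_of_real \<tau> - z (\<sigma>Z j)) < \<epsilon> \<and>
           cmod (z j - \<i> * complex_of_real \<tau> - z (inv \<sigma>Z j)) < \<epsilon>) \<and>
       (\<forall>r. w r \<in> strip a0 b0 \<longrightarrow>
           cmod (w r + \<i> * complex_of_real \<tau> - w (\<sigma>W r)) < \<epsilon> \<and>
           cmod (w r - \<i> * complex_of_real \<tau> - w (inv \<sigma>W r)) < \<epsilon>)" if "\<tau> \<in> E" for \<tau>
  proof -
    have "\<tau> \<in> range (\<lambda>n. t1 n - t1 (rep (c n)))" using that E_def by simp
    then obtain n where n: "\<tau> = t1 n - t1 (rep (c n))" by blast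
    define m where "m = rep (c n)"
    have cm: "c m = c n" using rep m_def by simp
    have sh1: "y \<in> T (3*e)" if "x \<in> T (2*e)" "\<bar>Re y - Re x\<bar> < e" for x y
      by (rule Tsh[OF that]) simp
    have sh2: "y \<in> T (2*e)" if "x \<in> T 0" "\<bar>Re y - Re x\<bar> < e + e" for x y
      by (rule Tsh[OF that]) simp
    have sh3: "y \<in> T (2*e)" if "x \<in> T 0" "\<bar>Re y - Re x\<bar> < e" for x y
      by (rule Tsh[OF that]) (use e0 in simp)
    have sub0: "strip a0 b0 \<subseteq> T (2*e)"
    proof
      fix x assume "x \<in> strip a0 b0"
      then have "x \<in> T 0" using T0 by simp
      then show "x \<in> T (2*e)" by (rule sh3) (use e0 in simp)
    qed
    have tz: "\<tau> = t1 n + - t1 m" using n m_def by simp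
    have "QP z (T (2*e)) (e + e) (t1 n + - t1 m)"
      by (rule QP_comp[OF conjunct1[OF t1] QP_neg[OF conjunct1[OF t1]] e0 e0 sh1 sh1])
    then have QZ: "QP z (strip a0 b0) \<epsilon> \<tau>" unfolding tz
      by (rule QP_mono[OF _ sub0]) (use e0 e_def in simp)
    have QW1: "QP w (T (2*e)) (e + e) (t2 n + - t2 m)"
      by (rule QP_comp[OF conjunct1[OF t2] QP_neg[OF conjunct1[OF t2]] e0 e0 sh1 sh1])
    have "\<bar>(t1 n - t2 n) - (t1 m - t2 m)\<bar> < e"
      by (rule floor_close[OF e0]) (use cm c_def in simp)
    then have QW2: "QP w (T (2*e)) e ((t1 n - t2 n) - (t1 m - t2 m))" by (rule QP_small)
    have "QP w (T 0) ((e + e) + e) ((t2 n + - t2 m) + ((t1 n - t2 n) - (t1 m - t2 m)))"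
      by (rule QP_comp[OF QW1 QW2 _ e0 sh2 sh3]) (use e0 in simp)
    moreover have "(t2 n + - t2 m) + ((t1 n - t2 n) - (t1 m - t2 m)) = \<tau>" using tz by simp
    ultimately have QW: "QP w (strip a0 b0) \<epsilon> \<tau>"
      using QP_mono[of w "T 0" "(e + e) + e" \<tau> "strip a0 b0" \<epsilon>] T0 e0 e_def by simp
    show ?thesis using QP_final[OF QZ] QP_final[OF QW] by blast
  qed
  ultimately show ?thesis by blast
qed
end
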